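(* Let $m\in[0,1]$ and $\varepsilon\ge0$. For all $z_1,z_2\in\mathbb{C}$ (with $z_1z_2\neq0$ if $m=\varepsilon=0$), setting $Z=\big((|z_1|^2+\varepsilon)^{\frac{m-1}{2}}z_1-(|z_2|^2+\varepsilon)^{\frac{m-1}{2}}z_2\big)\overline{(z_1-z_2)}$, we have $$2\sqrt m\,|\Im Z|\le(1-m)\Re Z.$$
   Context: When $m=1$ the factor $(|z|^2+\varepsilon)^0$ equals $1$. For $m<1$, $\varepsilon=0$ and $z=0$ the expression $(|z|^2)^{\frac{m-1}{2}}z$ is interpreted as $0$ (when $m>0$). *)

theory Defs
  imports Complex_Main
begin

text \<open>The map z \<mapsto> (|z|^2+eps)^((m-1)/2) z, with the conventions:
  for m = 1 the factor is 1; if |z|^2+eps = 0 (i.e. eps = 0, z = 0) the value is 0.\<close>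
definition pmap :: "real \<Rightarrow> real \<Rightarrow> complex \<Rightarrow> complex" where
  "pmap m eps z =
     (if m = 1 then z
      else if (cmod z)^2 + eps = 0 then 0
      else complex_of_real (((cmod z)^2 + eps) powr ((m - 1) / 2)) * z)"

end

theory Submission
  imports Defs "HOL-Analysis.Analysis"
begin


lemma sinh_conv: "0 \<le> (s::real) \<Longrightarrow> 0 \<le> k \<Longrightarrow> k \<le> 1 \<Longrightarrow> sinh (k * s) \<le> k * sinh s"
proof -
  assume s: "0 \<le> s" and k: "0 \<le> k" "k \<le> 1"
  have "convex_on {0..} (sinh::real\<Rightarrow>real)"
  proof (rule convex_on_realI[where f'=cosh])
    show "connected {0::real..}" by simp
    show "\<And>x. x \<in> {0..} \<Longrightarrow> (sinh has_real_derivative cosh x) (at x)"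
      by (auto intro!: derivative_eq_intros)
    show "\<And>x y. x \<in> {0::real..} \<Longrightarrow> y \<in> {0..} \<Longrightarrow> x \<le> y \<Longrightarrow> cosh x \<le> cosh y"
      by (simp add: cosh_real_nonneg_le_iff)
  qed
  from convex_onD[OF this, of k 0 s] s k show ?thesis by simp
qed

lemma sinh_le_x_cosh: "0 \<le> (d::real) \<Longrightarrow> sinh d \<le> d * cosh d"
proof -
  assume d: "0 \<le> d"
  have "(\<lambda>x. x * cosh x - sinh x) 0 \<le> (\<lambda>x. x * cosh x - sinh x) (d::real)"
  proof (rule DERIV_nonneg_imp_nondecreasing[OF d])
    fix x :: real assume "0 \<le> x" "x \<le> d"
    show "\<exists>y. ((\<lambda>x. x * cosh x - sinh x) has_real_derivative y) (at x) \<and> 0 \<le> y"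
      by (rule exI[of _ "x * sinh x"]) (use \<open>0 \<le> x\<close> in \<open>auto intro!: derivative_eq_intros\<close>)
  qed
  then show ?thesis by simp
qed

lemma x_le_sinh: "0 \<le> (x::real) \<Longrightarrow> x \<le> sinh x"
  using real_le_x_sinh[of x] by (simp add: sinh_field_def exp_minus)

lemma HM:
  fixes k s d :: real
  assumes k: "0 \<le> k" "k \<le> 1" and s: "0 \<le> s" and d: "0 \<le> d" "d \<le> k * s"
  shows "(1-k) * sinh d ^ 2 \<le> k^2 * cosh d * sinh (s - d) * sinh s"
proof -
  have m: "0 \<le> 1 - k" using k by simp
  have sd: "0 \<le> sinh d" using d by simp
  have c: "0 < cosh d" by simp
  have 1: "sinh d \<le> d * cosh d" using sinh_le_x_cosh d by simp
  have 2: "sinh d \<le> sinh (k * s)" using d by simp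
  have 3: "sinh (k * s) \<le> k * sinh s" using sinh_conv s k by simp
  have 4: "(1-k) * s \<le> sinh (s - d)"
  proof -
    have "(1-k) * s \<le> s - d" using d by (simp add: algebra_simps)
    moreover have "(1-k) * s \<ge> 0" using m s by simp
    ultimately have "(1-k) * s \<le> sinh ((1-k) * s)" "sinh ((1-k) * s) \<le> sinh (s-d)" using x_le_sinh by auto
    thus ?thesis by linarith
  qed
  have "(1-k) * sinh d ^ 2 \<le> (1-k) * (d * cosh d) * sinh d"
  proof -
    have "sinh d * sinh d \<le> (d * cosh d) * sinh d" using 1 sd by (rule mult_right_mono)
    then show ?thesis using m by (simp add: power2_eq_square mult_left_mono mult.assoc)
  qed
  also have "\<dots> \<le> (1-k) * (k * s * cosh d) * sinh d"
    using d sd m c by (intro mult_right_mono mult_left_mono) auto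
  also have "\<dots> = k * cosh d * ((1-k) * s) * sinh d" by simp
  also have "\<dots> \<le> k * cosh d * sinh (s-d) * (k * sinh s)"
  proof -
    have "sinh d \<le> k * sinh s" using 2 3 by linarith
    moreover have "0 \<le> (1-k) * s" using m s by simp
    ultimately have "((1-k) * s) * sinh d \<le> sinh (s-d) * (k * sinh s)"
      using 4 sd by (meson mult_mono order_trans)
    moreover have "0 \<le> k * cosh d" using k c by simp
    ultimately show ?thesis using mult_left_mono by (metis mult.assoc)
  qed
  also have "\<dots> = k^2 * cosh d * sinh (s - d) * sinh s" by (simp add: power2_eq_square)
  finally show ?thesis .
qed

lemma E:
  fixes k s d :: real
  assumes k: "0 \<le> k" "k \<le> 1" and s: "0 \<le> s" and d: "0 \<le> d" "d \<le> k * s"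
  shows "2*(1-k)*(exp(2 * d)-1)^2*exp(2 * s) \<le> k^2*(1+exp(2 * d))*(exp(2 * s)-exp(2 * d))*(exp(2 * s)-1)"
proof -
  define x where "x = exp d"
  define y where "y = exp s"
  have x: "x > 0" and y: "y > 0" by (auto simp: x_def y_def)
  have e: "exp(2 * d) = x^2" "exp(2 * s) = y^2" by (simp_all add: x_def y_def power2_eq_square flip: exp_add)
  have h: "(1-k) * ((x - 1/x)/2)^2 \<le> k^2 * ((x + 1/x)/2) * ((y/x - x/y)/2) * ((y - 1/y)/2)"
    using HM[OF assms] by (simp add: sinh_field_def cosh_field_def x_def y_def exp_minus exp_diff inverse_eq_divide)
  have "8*x^2*y^2 * ((1-k) * ((x - 1/x)/2)^2) \<le> 8*x^2*y^2 * (k^2 * ((x + 1/x)/2) * ((y/x - x/y)/2) * ((y - 1/y)/2))"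
    using h x y by (intro mult_left_mono) auto
  moreover have "8*x^2*y^2 * ((1-k) * ((x - 1/x)/2)^2) = 2*(1-k)*(x^2-1)^2*y^2"
    using x y by (simp add: field_simps power2_eq_square)
  moreover have "8*x^2*y^2 * (k^2 * ((x + 1/x)/2) * ((y/x - x/y)/2) * ((y - 1/y)/2)) = k^2*(1+x^2)*(y^2-x^2)*(y^2-1)"
    using x y by (simp add: field_simps power2_eq_square)
  ultimately show ?thesis unfolding e by (metis (no_types, lifting))
qed

lemma OneD_core:
  fixes m eps r1 r2 :: real
  assumes m: "0 \<le> m" "m < 1" and e: "0 \<le> eps" and r: "0 \<le> r2" "r2 \<le> r1"
  defines "a1 \<equiv> (r1^2 + eps) powr ((m - 1) / 2)" and "a2 \<equiv> (r2^2 + eps) powr ((m - 1) / 2)"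
  shows "0 \<le> (a1 * r1 - a2 * r2) * (r1 - r2) \<and>
         2 * m * (a2 - a1)^2 * r1 * r2 \<le> (1 - m)^2 * (a1 + a2) * (a1 * r1 - a2 * r2) * (r1 - r2)"
proof (cases "r2 = 0")
  case True
  have "0 \<le> a1" "0 \<le> a2" by (simp_all add: a1_def a2_def)
  then show ?thesis using True r by simp
next
  case False
  define k where "k = 1 - m"
  have k: "0 \<le> k" "k \<le> 1" using m by (auto simp: k_def)
  have r2p: "0 < r2" using False r by simp
  have r1p: "0 < r1" using r2p r by simp
  define u1 where "u1 = r1^2 + eps"
  define u2 where "u2 = r2^2 + eps"
  have u: "0 < u1" "0 < u2" using r1p r2p e by (auto simp: u1_def u2_def add_pos_nonneg)
  have ap: "0 < a1" "0 < a2" using u by (auto simp: a1_def a2_def u1_def u2_def)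
  have la: "ln a1 = ((m - 1)/2) * ln u1" "ln a2 = ((m - 1)/2) * ln u2"
    using u by (simp_all add: a1_def a2_def u1_def u2_def ln_powr)
  define d where "d = (ln a2 - ln a1) / 2"
  define s where "s = (ln r1 - ln r2) / 2"
  have u12: "u2 \<le> u1" using r r2p unfolding u1_def u2_def by (simp add: power_mono)
  have lu: "ln u2 \<le> ln u1" using u u12 by simp
  have "u1 * r2^2 \<le> u2 * r1^2"
    using r r2p e unfolding u1_def u2_def by (simp add: algebra_simps power_mono mult_left_mono)
  hence "ln (u1 * r2^2) \<le> ln (u2 * r1^2)" using u r1p r2p by simp
  hence lu2: "ln u1 - ln u2 \<le> 2 * (ln r1 - ln r2)"
    using u r1p r2p by (simp add: ln_mult ln_realpow)
  have lr: "ln r2 \<le> ln r1" using r r2p by simp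
  have d_eq: "d = (k/4) * (ln u1 - ln u2)" unfolding d_def la k_def by (simp add: field_simps)
  have d0: "0 \<le> d" unfolding d_eq using k lu by simp
  have dks: "d \<le> k * s"
  proof -
    have "k * (ln u1 - ln u2) \<le> k * (2 * (ln r1 - ln r2))" using k lu2 by (intro mult_left_mono) auto
    moreover have "d = (k * (ln u1 - ln u2)) / 4" unfolding d_eq by simp
    moreover have "k * s = (k * (2 * (ln r1 - ln r2))) / 4" unfolding s_def by simp
    ultimately show ?thesis by linarith
  qed
  have s0: "0 \<le> s" unfolding s_def using lr by simp
  have ds: "d \<le> s" using dks k s0 by (metis mult_left_le_one_le order_trans)
  define A where "A = exp (2 * d)"
  define P where "P = exp (2 * s)"
  have "2 * d = ln a2 - ln a1" by (simp add: d_def)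
  hence A: "a2 = a1 * A" unfolding A_def using ap by (simp add: exp_diff)
  have "2 * s = ln r1 - ln r2" by (simp add: s_def)
  hence P: "r1 = r2 * P" unfolding P_def using r1p r2p by (simp add: exp_diff)
  have PA: "A \<le> P" unfolding A_def P_def using ds by simp
  have A1: "1 \<le> A" unfolding A_def using d0 by simp
  have EE: "2 * (1 - k) * (A - 1)^2 * P \<le> k^2 * (1 + A) * (P - A) * (P - 1)"
    using E[OF k s0 d0 dks] unfolding A_def P_def .
  have "a1^2 * r2^2 * (2 * (1 - k) * (A - 1)^2 * P) \<le> a1^2 * r2^2 * (k^2 * (1 + A) * (P - A) * (P - 1))"
    using EE by (intro mult_left_mono) auto
  moreover have "a1^2 * r2^2 * (2 * (1 - k) * (A - 1)^2 * P) = 2 * m * (a2 - a1)^2 * r1 * r2"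
    unfolding A P k_def by (simp add: power2_eq_square algebra_simps)
  moreover have "a1^2 * r2^2 * (k^2 * (1 + A) * (P - A) * (P - 1)) = (1 - m)^2 * (a1 + a2) * (a1 * r1 - a2 * r2) * (r1 - r2)"
    unfolding A P k_def by (simp add: power2_eq_square algebra_simps)
  moreover have "0 \<le> (a1 * r1 - a2 * r2) * (r1 - r2)"
  proof -
    have "a1 * r1 - a2 * r2 = a1 * r2 * (P - A)" unfolding A P by (simp add: algebra_simps)
    also have "\<dots> \<ge> 0" using ap r2p PA by simp
    finally show ?thesis using r by simp
  qed
  ultimately show ?thesis by simp
qed

lemma OneD:
  fixes m eps r1 r2 :: real
  assumes m: "0 \<le> m" "m < 1" and e: "0 \<le> eps" and r: "0 \<le> r1" "0 \<le> r2"
  defines "a1 \<equiv> (r1^2 + eps) powr ((m - 1) / 2)" and "a2 \<equiv> (r2^2 + eps) powr ((m - 1) / 2)"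
  shows "0 \<le> (a1 * r1 - a2 * r2) * (r1 - r2) \<and>
         2 * m * (a2 - a1)^2 * r1 * r2 \<le> (1 - m)^2 * (a1 + a2) * (a1 * r1 - a2 * r2) * (r1 - r2)"
proof (cases "r2 \<le> r1")
  case True
  then show ?thesis using OneD_core[OF m e r(2) True] unfolding a1_def a2_def by simp
next
  case False
  then have "r1 \<le> r2" by simp
  from OneD_core[OF m e r(1) this] show ?thesis unfolding a1_def a2_def
    by (simp add: algebra_simps power2_commute)
qed

lemma Alg:
  fixes a1 a2 r1 r2 p q m :: real
  assumes a: "0 \<le> a1" "0 \<le> a2" and r: "0 \<le> r1" "0 \<le> r2" and m: "0 \<le> m" "m \<le> 1"
    and pq: "p^2 + q^2 = r1^2 * r2^2"
    and K: "2 * m * (a2 - a1)^2 * r1 * r2 \<le> (1 - m)^2 * (a1 + a2) * (a1 * r1 - a2 * r2) * (r1 - r2)"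
    and X0: "0 \<le> (a1 * r1 - a2 * r2) * (r1 - r2)"
  shows "2 * sqrt m * \<bar>(a2 - a1) * q\<bar> \<le> (1 - m) * (a1 * r1^2 + a2 * r2^2 - (a1 + a2) * p)"
proof -
  define X where "X = (a1 * r1 - a2 * r2) * (r1 - r2)"
  define R where "R = r1 * r2"
  define k where "k = 1 - m"
  have R0: "0 \<le> R" using r by (simp add: R_def)
  have "p^2 \<le> R^2" using pq by (simp add: R_def power_mult_distrib) (metis le_add_same_cancel1 zero_le_power2)
  hence pR: "p \<le> R" using R0 power2_le_imp_le by blast
  define Y where "Y = (a1 + a2) * (R - p)"
  have Y0: "0 \<le> Y" using a pR by (simp add: Y_def)
  have q2: "q^2 \<le> 2 * R * (R - p)"
  proof -
    have "q^2 = (R - p) * (R + p)" using pq by (simp add: R_def power2_eq_square algebra_simps)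
    also have "\<dots> \<le> (R - p) * (2 * R)" using pR by (intro mult_left_mono) auto
    finally show ?thesis by (simp add: algebra_simps)
  qed
  have "(2 * sqrt m * \<bar>(a2 - a1) * q\<bar>)^2 = 4 * m * (a2 - a1)^2 * q^2"
    using m by (simp add: power_mult_distrib power2_abs)
  also have "\<dots> \<le> 4 * m * (a2 - a1)^2 * (2 * R * (R - p))"
    using q2 m by (intro mult_left_mono) auto
  also have "\<dots> = 4 * (R - p) * (2 * m * (a2 - a1)^2 * r1 * r2)" by (simp add: R_def algebra_simps)
  also have "\<dots> \<le> 4 * (R - p) * (k^2 * (a1 + a2) * X)"
    using K pR unfolding k_def X_def by (intro mult_left_mono) (auto simp: algebra_simps)
  also have "\<dots> = 4 * k^2 * X * Y" by (simp add: Y_def algebra_simps)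
  also have "\<dots> \<le> (k * (X + Y))^2"
  proof -
    have "0 \<le> k^2 * (X - Y)^2" by simp
    thus ?thesis by (simp add: power2_eq_square algebra_simps)
  qed
  finally have sq: "(2 * sqrt m * \<bar>(a2 - a1) * q\<bar>)^2 \<le> (k * (X + Y))^2" .
  have "0 \<le> k * (X + Y)" using m X0 Y0 by (simp add: k_def X_def)
  hence "2 * sqrt m * \<bar>(a2 - a1) * q\<bar> \<le> k * (X + Y)" using sq power2_le_imp_le by blast
  moreover have "X + Y = a1 * r1^2 + a2 * r2^2 - (a1 + a2) * p"
    by (simp add: X_def Y_def R_def power2_eq_square algebra_simps)
  ultimately show ?thesis by (simp add: k_def)
qed


lemma pmap_eq:
  assumes "m \<noteq> 1"
  shows "pmap m eps z = complex_of_real ((cmod z ^ 2 + eps) powr ((m - 1) / 2)) * z"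
  using assms by (auto simp: pmap_def)

theorem lemma5p7:
  fixes m eps :: real and z1 z2 :: complex
  assumes "0 \<le> m" and "m \<le> 1" and "0 \<le> eps"
    and "m = 0 \<and> eps = 0 \<longrightarrow> z1 * z2 \<noteq> 0"
  shows "2 * sqrt m * \<bar>Im ((pmap m eps z1 - pmap m eps z2) * cnj (z1 - z2))\<bar>
           \<le> (1 - m) * Re ((pmap m eps z1 - pmap m eps z2) * cnj (z1 - z2))"
proof (cases "m = 1")
  case True
  then show ?thesis by (simp add: pmap_def algebra_simps)
next
  case False
  hence m1: "m < 1" using assms by simp
  define r1 where "r1 = cmod z1"
  define r2 where "r2 = cmod z2"
  define a1 where "a1 = (r1^2 + eps) powr ((m - 1) / 2)"
  define a2 where "a2 = (r2^2 + eps) powr ((m - 1) / 2)"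
  have pm: "pmap m eps z1 = complex_of_real a1 * z1" "pmap m eps z2 = complex_of_real a2 * z2"
    using pmap_eq[OF False] by (simp_all add: a1_def a2_def r1_def r2_def)
  have r: "0 \<le> r1" "0 \<le> r2" by (simp_all add: r1_def r2_def)
  have a: "0 \<le> a1" "0 \<le> a2" by (simp_all add: a1_def a2_def)
  from OneD[OF assms(1) m1 assms(3) r] have KX:
    "0 \<le> (a1 * r1 - a2 * r2) * (r1 - r2)"
    "2 * m * (a2 - a1)^2 * r1 * r2 \<le> (1 - m)^2 * (a1 + a2) * (a1 * r1 - a2 * r2) * (r1 - r2)"
    unfolding a1_def a2_def by auto
  define p where "p = Re z1 * Re z2 + Im z1 * Im z2"
  define q where "q = Im z1 * Re z2 - Re z1 * Im z2"
  have r1s: "r1^2 = Re z1 ^ 2 + Im z1 ^ 2" by (simp add: r1_def cmod_power2)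
  have r2s: "r2^2 = Re z2 ^ 2 + Im z2 ^ 2" by (simp add: r2_def cmod_power2)
  have pq: "p^2 + q^2 = r1^2 * r2^2" unfolding r1s r2s p_def q_def
    by (simp add: power2_eq_square algebra_simps)
  have ImZ: "Im ((pmap m eps z1 - pmap m eps z2) * cnj (z1 - z2)) = (a2 - a1) * q"
    unfolding pm q_def by (simp add: algebra_simps)
  have ReZ: "Re ((pmap m eps z1 - pmap m eps z2) * cnj (z1 - z2)) = a1 * r1^2 + a2 * r2^2 - (a1 + a2) * p"
    unfolding pm p_def r1s r2s by (simp add: power2_eq_square algebra_simps)
  show ?thesis unfolding ImZ ReZ
    using Alg[OF a r assms(1,2) pq KX(2) KX(1)] .
qed

end
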